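(* Let $K \subset \mathbb R^3$ be a regular convex cone whose boundary is of class $C^k$, $k \geq 5$, and positively curved, and let $\gamma \subset \mathbb{RP}^2$ be the projective image of $\partial K$. Let $\alpha,\beta$ be $2\pi$-periodic real functions of class $C^{k-4}$, $C^{k-5}$ respectively, and let $y:\mathbb R \to \mathbb R^3$ be a $2\pi$-periodic solution of \[ y''' + 2\alpha y' + \alpha' y + \beta y = 0 \] such that $\det(y'',y',y) \equiv 1$, the projective image of $y$ is $\gamma$, and $y(t)$ makes exactly one turn around $K$ along $\partial K$ as $t$ runs over one period. If the eigenvalues of the monodromy of the equation $x'' + \frac12\alpha x = 0$ are not equal to $1$, then $\gamma$ does not possess a global periodic Forsyth–Laguerre parametrization.
   Context: A regular convex cone is a closed convex cone with non-empty interior containing no lines. "Positively curved boundary" means $\partial K\setminus\{0\}$ has everywhere positive curvature (transverse to the rays), so that $\gamma$ is a simple closed strictly convex curve without inflection points. The monodromy of $x''+\frac12\alpha x = 0$ is the matrix $T\in SL(2,\mathbb R)$ with $x(t+2\pi)=Tx(t)$ for a vector-valued solution $x:\mathbb R\to\mathbb R^2$ with linearly independent components (its conjugacy class does not depend on the choice of $x$). A global periodic Forsyth–Laguerre parametrization of $\gamma$ is a periodic parametrization of the whole closed curve $\gamma$ by a real variable $s$ (one period corresponding to one traversal of $\gamma$) for which $\gamma$ has a periodic lift $\tilde y(s)$ to $\mathbb R^3$ with $\det(\tilde y'',\tilde y',\tilde y)\equiv 1$ solving $\tilde y''' + 2\tilde\alpha\tilde y' + \tilde\alpha'\tilde y +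 \tilde\beta\tilde y = 0$ with $\tilde\alpha \equiv 0$ (derivatives with respect to $s$). *)

theory Defs
  imports "HOL-Analysis.Analysis"
begin

definition Ck :: "nat \<Rightarrow> (real \<Rightarrow> real) \<Rightarrow> bool" where
  "Ck k f \<longleftrightarrow> (\<forall>j<k. \<forall>x. (deriv ^^ j) f differentiable (at x))
                 \<and> continuous_on UNIV ((deriv ^^ k) f)"

definition vderiv :: "(real \<Rightarrow> real ^ 'n) \<Rightarrow> real \<Rightarrow> real ^ 'n" where
  "vderiv y t = (\<chi> i. deriv (\<lambda>s. y s $ i) t)"

definition Ck_vec :: "nat \<Rightarrow> (real \<Rightarrow> real ^ 'n) \<Rightarrow> bool" where
  "Ck_vec k y \<longleftrightarrow> (\<forall>i. Ck k (\<lambda>t. y t $ i))"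

definition det3 :: "real^3 \<Rightarrow> real^3 \<Rightarrow> real^3 \<Rightarrow> real" where
  "det3 a b c = det (vector [a, b, c] :: real^3^3)"

definition regular_convex_cone :: "(real^3) set \<Rightarrow> bool" where
  "regular_convex_cone K \<longleftrightarrow> closed K \<and> convex K \<and> cone K \<and> interior K \<noteq> {}
     \<and> (\<forall>x. x \<in> K \<and> -x \<in> K \<longrightarrow> x = 0)"

text \<open>The boundary minus the apex is a C^k surface with positive curvature transverse to the
  rays: it is swept out by the rays through a C^k periodic curve c whose projective image is
  a locally strictly convex curve without inflection points, i.e. det(c,c',c'') never vanishes
  (this also makes (lambda,t) |-> lambda c(t) an immersion).\<close>
definition Ck_pos_curved_boundary :: "nat \<Rightarrow> (real^3) set \<Rightarrow> bool" where
  "Ck_pos_curved_boundary k K \<longleftrightarrow>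
     (\<exists>c :: real \<Rightarrow> real^3. Ck_vec k c \<and> (\<forall>t. c (t + 2*pi) = c t)
        \<and> (\<forall>t. det3 (vderiv (vderiv c) t) (vderiv c t) (c t) \<noteq> 0)
        \<and> frontier K - {0} = {l *\<^sub>R c t | l t. l > 0})"

definition hill_solution :: "(real \<Rightarrow> real) \<Rightarrow> (real \<Rightarrow> real) \<Rightarrow> bool" where
  "hill_solution \<alpha> x \<longleftrightarrow> (\<forall>t. x differentiable (at t) \<and> deriv x differentiable (at t)
       \<and> deriv (deriv x) t + \<alpha> t / 2 * x t = 0)"

definition is_monodromy :: "(real \<Rightarrow> real) \<Rightarrow> real^2^2 \<Rightarrow> bool" where
  "is_monodromy \<alpha> T \<longleftrightarrow>
     (\<exists>x :: real \<Rightarrow> real^2. (\<forall>i. hill_solution \<alpha> (\<lambda>t. x t $ i))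
        \<and> (\<forall>a. (\<forall>t. a \<bullet> x t = 0) \<longrightarrow> a = 0)
        \<and> (\<forall>t. x (t + 2*pi) = T *v x t))"

definition has_eigenvalue_one :: "real^2^2 \<Rightarrow> bool" where
  "has_eigenvalue_one T \<longleftrightarrow> (\<exists>v. v \<noteq> 0 \<and> T *v v = v)"

text \<open>gamma (projective image of the boundary of K) has a global periodic Forsyth--Laguerre
  parametrization: a C^3 periodic lift ytilde (period L, one period = one traversal of gamma),
  with det(ytilde'',ytilde',ytilde) = 1 and ytilde''' + betatilde ytilde = 0.\<close>
definition has_global_periodic_FL :: "(real^3) set \<Rightarrow> bool" where
  "has_global_periodic_FL K \<longleftrightarrow>
     (\<exists>L > 0. \<exists>(yt :: real \<Rightarrow> real^3) (bt :: real \<Rightarrow> real).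
        Ck_vec 3 yt \<and> (\<forall>s. yt (s + L) = yt s)
        \<and> (\<forall>s. \<exists>l. l \<noteq> 0 \<and> l *\<^sub>R yt s \<in> frontier K - {0})
        \<and> (\<forall>x \<in> frontier K - {0}. \<exists>!s. s \<in> {0..<L} \<and> (\<exists>l. l \<noteq> 0 \<and> x = l *\<^sub>R yt s))
        \<and> (\<forall>s. det3 (vderiv (vderiv yt) s) (vderiv yt s) (yt s) = 1)
        \<and> (\<forall>s. vderiv (vderiv (vderiv yt)) s + bt s *\<^sub>R yt s = 0))"

end

theory Submission
  imports Defs
begin

unbundle cross3_syntax

lemma det3_expand: "det3 a b c = a$1*b$2*c$3 + a$2*b$3*c$1 + a$3*b$1*c$2
   - a$2*b$1*c$3 - a$3*b$2*c$1 - a$1*b$3*c$2"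
  unfolding det3_def det_3 by (simp add: vector_3 algebra_simps)

lemma mult_commute_abs: "(\<lambda>x. x * (c::real)) = ((*) c)" by (rule ext) (simp add: mult.commute)

lemma vd_nth: "(f has_vector_derivative f') F \<Longrightarrow> ((\<lambda>t. f t $ i) has_real_derivative f' $ i) F"
  unfolding has_vector_derivative_def has_field_derivative_def
  by (drule bounded_linear.has_derivative[OF bounded_linear_vec_nth[of i]]) (simp add: mult_commute_abs)

lemma vd_from_nth:
  fixes f :: "real \<Rightarrow> real^'n"
  assumes "\<And>i. ((\<lambda>t. f t $ i) has_real_derivative (f' $ i)) (at a within S)"
  shows "(f has_vector_derivative f') (at a within S)"
  unfolding has_vector_derivative_def
proof (subst has_derivative_componentwise_within, intro ballI)
  fix b :: "real^'n" assume "b \<in> Basis"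
  then obtain i where b: "b = axis i 1" by (auto simp: Basis_vec_def)
  show "((\<lambda>x. f x \<bullet> b) has_derivative (\<lambda>x. x *\<^sub>R f' \<bullet> b)) (at a within S)"
    using assms[of i] unfolding b has_field_derivative_def
    by (simp add: inner_axis mult_commute_abs)
qed

lemma det3_add1[simp]: "det3 (a + a') b c = det3 a b c + det3 a' b c" by (simp add: det3_expand algebra_simps)
lemma det3_add2[simp]: "det3 a (b + b') c = det3 a b c + det3 a b' c" by (simp add: det3_expand algebra_simps)
lemma det3_add3[simp]: "det3 a b (c + c') = det3 a b c + det3 a b c'" by (simp add: det3_expand algebra_simps)
lemma det3_diff1[simp]: "det3 (a - a') b c = det3 a b c - det3 a' b c" by (simp add: det3_expand algebra_simps)
lemma det3_diff2[simp]: "det3 a (b - b') c = det3 a b c - det3 a b' c" by (simp add: det3_expand algebra_simps)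
lemma det3_diff3[simp]: "det3 a b (c - c') = det3 a b c - det3 a b c'" by (simp add: det3_expand algebra_simps)
lemma det3_scale1[simp]: "det3 (r *\<^sub>R a) b c = r * det3 a b c" by (simp add: det3_expand algebra_simps)
lemma det3_scale2[simp]: "det3 a (r *\<^sub>R b) c = r * det3 a b c" by (simp add: det3_expand algebra_simps)
lemma det3_scale3[simp]: "det3 a b (r *\<^sub>R c) = r * det3 a b c" by (simp add: det3_expand algebra_simps)
lemma det3_neg1[simp]: "det3 (- a) b c = - det3 a b c" by (simp add: det3_expand algebra_simps)
lemma det3_neg2[simp]: "det3 a (- b) c = - det3 a b c" by (simp add: det3_expand algebra_simps)
lemma det3_neg3[simp]: "det3 a b (- c) = - det3 a b c" by (simp add: det3_expand algebra_simps)
lemma det3_zero[simp]: "det3 0 b c = 0" "det3 a 0 c = 0" "det3 a b 0 = 0" by (simp_all add: det3_expand)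
lemma det3_same[simp]: "det3 a a c = 0" "det3 a b a = 0" "det3 a b b = 0" by (simp_all add: det3_expand algebra_simps)
lemma det3_swap12: "det3 b a c = - det3 a b c" by (simp add: det3_expand algebra_simps)
lemma det3_swap23: "det3 a c b = - det3 a b c" by (simp add: det3_expand algebra_simps)
lemma det3_swap13: "det3 c b a = - det3 a b c" by (simp add: det3_expand algebra_simps)
lemma det3_cyc: "det3 b c a = det3 a b c" by (simp add: det3_expand algebra_simps)

lemma det3_deriv:
  assumes "(a has_vector_derivative a') (at t)" "(b has_vector_derivative b') (at t)"
     "(c has_vector_derivative c') (at t)"
  shows "((\<lambda>s. det3 (a s) (b s) (c s)) has_real_derivative
     (det3 a' (b t) (c t) + det3 (a t) b' (c t) + det3 (a t) (b t) c')) (at t)"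
proof -
  note A = vd_nth[OF assms(1)] and B = vd_nth[OF assms(2)] and C = vd_nth[OF assms(3)]
  show ?thesis unfolding det3_expand
    apply (rule derivative_eq_intros A B C refl)+
    apply (simp add: algebra_simps)
    done
qed

lemma vderiv_nth: "vderiv y t $ i = deriv (\<lambda>s. y s $ i) t"
  by (simp add: vderiv_def)

lemma vderiv_eqI: "(f has_vector_derivative v) (at t) \<Longrightarrow> vderiv f t = v"
  unfolding vderiv_def by (simp add: vec_eq_iff DERIV_imp_deriv vd_nth)

lemma Ck3_comp:
  assumes "Ck 3 f"
  shows "DERIV f t :> deriv f t" "DERIV (deriv f) t :> deriv (deriv f) t"
    "DERIV (deriv (deriv f)) t :> deriv (deriv (deriv f)) t"
proof -
  have d: "(deriv ^^ j) f differentiable (at t)" if "j < 3" for j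
    using assms that unfolding Ck_def by blast
  show "DERIV f t :> deriv f t" using d[of 0] by (simp add: DERIV_deriv_iff_real_differentiable)
  show "DERIV (deriv f) t :> deriv (deriv f) t" using d[of 1] by (simp add: DERIV_deriv_iff_real_differentiable)
  show "DERIV (deriv (deriv f)) t :> deriv (deriv (deriv f)) t" using d[of 2]
    by (simp add: DERIV_deriv_iff_real_differentiable numeral_2_eq_2)
qed

lemma Ck3_vec:
  fixes y :: "real \<Rightarrow> real^'n"
  assumes "Ck_vec 3 y"
  shows "(y has_vector_derivative vderiv y t) (at t)"
    "(vderiv y has_vector_derivative vderiv (vderiv y) t) (at t)"
    "(vderiv (vderiv y) has_vector_derivative vderiv (vderiv (vderiv y)) t) (at t)"
proof -
  have C: "Ck 3 (\<lambda>t. y t $ i)" for i using assms unfolding Ck_vec_def by blast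
  have e1: "(\<lambda>s. vderiv y s $ i) = deriv (\<lambda>t. y t $ i)" for i by (rule ext) (simp add: vderiv_def)
  have e2: "(\<lambda>s. vderiv (vderiv y) s $ i) = deriv (deriv (\<lambda>t. y t $ i))" for i
    by (rule ext) (simp add: vderiv_nth e1)
  have e3: "(\<lambda>s. vderiv (vderiv (vderiv y)) s $ i) = deriv (deriv (deriv (\<lambda>t. y t $ i)))" for i
    by (rule ext) (simp add: vderiv_nth e2)
  show "(y has_vector_derivative vderiv y t) (at t)"
    by (rule vd_from_nth) (simp add: vderiv_nth Ck3_comp(1)[OF C])
  show "(vderiv y has_vector_derivative vderiv (vderiv y) t) (at t)"
    by (rule vd_from_nth) (simp add: e1 vderiv_nth Ck3_comp(2)[OF C])
  show "(vderiv (vderiv y) has_vector_derivative vderiv (vderiv (vderiv y)) t) (at t)"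
    by (rule vd_from_nth) (simp add: e2 vderiv_nth Ck3_comp(3)[OF C])
qed



lemma hill_solutionI:
  assumes "\<And>t. DERIV x t :> x1 t" "\<And>t. DERIV x1 t :> x2 t" "\<And>t. x2 t + \<alpha> t / 2 * x t = 0"
  shows "hill_solution \<alpha> x"
proof -
  have dx: "deriv x = x1" by (rule ext) (rule DERIV_imp_deriv[OF assms(1)])
  have ddx: "deriv x1 = x2" by (rule ext) (rule DERIV_imp_deriv[OF assms(2)])
  show ?thesis unfolding hill_solution_def dx ddx
    using assms by (auto simp: real_differentiable_def)
qed

lemma antideriv_R:
  fixes F :: "real \<Rightarrow> real"
  assumes cont: "continuous_on UNIV F"
  defines "W \<equiv> \<lambda>t. integral {0..t} F - integral {t..0} F"
  shows "DERIV W t :> F t"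
proof -
  define a where "a = min t 0 - 1"
  define b where "b = max t 0 + 1"
  have int: "F integrable_on {u..v}" for u v
    by (rule integrable_continuous_real) (rule continuous_on_subset[OF cont], auto)
  have eq: "W s = integral {a..s} F - integral {a..0} F" if "a < s" for s
  proof (cases "s \<le> 0")
    case True
    have "integral {a..s} F + integral {s..0} F = integral {a..0} F"
      by (rule Henstock_Kurzweil_Integration.integral_combine) (use True that int in auto)
    moreover have "integral {0..s} F = 0" if "s < 0" using that by simp
    ultimately show ?thesis using True unfolding W_def
      by (cases "s = 0") auto
  next
    case False
    have "integral {a..0} F + integral {0..s} F = integral {a..s} F"
      by (rule Henstock_Kurzweil_Integration.integral_combine) (use False that int a_def in auto)
    moreover have "integral {s..0} F = 0" using False by simp
    ultimately show ?thesis unfolding W_def by auto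
  qed
  have "((\<lambda>x. integral {a..x} F) has_real_derivative F t) (at t within {a..b})"
    by (rule integral_has_real_derivative) (use cont in \<open>auto intro: continuous_on_subset simp: a_def b_def\<close>)
  then have "((\<lambda>x. integral {a..x} F) has_real_derivative F t) (at t)"
    using at_within_Icc_at[of a t b] by (simp add: a_def b_def)
  then have "((\<lambda>x. integral {a..x} F - integral {a..0} F) has_real_derivative F t) (at t)"
    by (auto intro!: derivative_eq_intros)
  then show ?thesis
    by (rule has_field_derivative_transform_within_open[where S="{a<..}"])
       (use eq a_def in auto)
qed

lemma DERIV_eqI: "DERIV f x :> a \<Longrightarrow> a = b \<Longrightarrow> DERIV f x :> b" by simp

lemma hill_from_mu:
  fixes \<alpha> \<mu> :: "real \<Rightarrow> real"
  assumes pos: "\<And>t. \<mu> t > 0" and per: "\<And>t. \<mu> (t + 2*pi) = \<mu> t"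
    and d1: "\<And>t. DERIV \<mu> t :> deriv \<mu> t"
    and d2: "\<And>t. DERIV (deriv \<mu>) t :> deriv (deriv \<mu>) t"
    and rel: "\<And>t. \<alpha> t = deriv (deriv \<mu>) t / \<mu> t - 3/2 * (deriv \<mu> t / \<mu> t)^2"
  shows "\<exists>T. is_monodromy \<alpha> T \<and> has_eigenvalue_one T"
proof -
  define m1 where "m1 = deriv \<mu>"
  define m2 where "m2 = deriv (deriv \<mu>)"
  define p where "p t = \<mu> t powr (-1/2)" for t
  define p1 where "p1 t = -1/2 * \<mu> t powr (-3/2) * m1 t" for t
  define p2 where "p2 t = 3/4 * \<mu> t powr (-5/2) * (m1 t)^2 - 1/2 * \<mu> t powr (-3/2) * m2 t" for t
  have pw3: "\<mu> t powr (-3/2) = \<mu> t powr (-1/2) / \<mu> t" for t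
  proof -
    have "\<mu> t powr (-3/2) = \<mu> t powr (-1/2 - 1)" by simp
    also have "... = \<mu> t powr (-1/2) / \<mu> t powr 1" by (rule powr_diff)
    also have "... = \<mu> t powr (-1/2) / \<mu> t" using pos[of t] by simp
    finally show ?thesis .
  qed
  have pw5: "\<mu> t powr (-5/2) = \<mu> t powr (-1/2) / (\<mu> t)^2" for t
  proof -
    have "\<mu> t powr (-5/2) = \<mu> t powr (-1/2 - 2)" by simp
    also have "... = \<mu> t powr (-1/2) / \<mu> t powr 2" by (rule powr_diff)
    also have "... = \<mu> t powr (-1/2) / (\<mu> t)^2" using pos[of t] by (simp add: powr_numeral)
    finally show ?thesis .
  qed
  have dp: "DERIV p t :> p1 t" for t
    unfolding p_def p1_def m1_def
    using DERIV_fun_powr[OF d1 pos, of "-1/2" t] by (simp add: algebra_simps)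
  have dp1: "DERIV p1 t :> p2 t" for t
  proof -
    have "DERIV (\<lambda>t. \<mu> t powr (-3/2)) t :> -3/2 * \<mu> t powr (-5/2) * m1 t"
      using DERIV_fun_powr[OF d1 pos, of "-3/2" t] by (simp add: m1_def)
    note A = this
    have B: "DERIV m1 t :> m2 t" using d2[of t] unfolding m2_def m1_def .
    have D: "DERIV p1 t :> (-1/2 * (-3/2 * \<mu> t powr (-5/2) * m1 t)) * m1 t + m2 t * (-1/2 * \<mu> t powr (-3/2))"
      unfolding p1_def by (rule DERIV_mult[OF DERIV_cmult[OF A] B])
    have "p2 t = (-1/2 * (-3/2 * \<mu> t powr (-5/2) * m1 t)) * m1 t + m2 t * (-1/2 * \<mu> t powr (-3/2))"
      unfolding p2_def by (simp add: algebra_simps power2_eq_square)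
    with D show ?thesis by simp
  qed
  have hp: "p2 t + \<alpha> t / 2 * p t = 0" for t
  proof -
    have "3/4 * (a / (\<mu> t)^2) * (m1 t)^2 - 1/2 * (a / \<mu> t) * m2 t +
       (m2 t / \<mu> t - 3/2 * (m1 t / \<mu> t)^2) / 2 * a = 0" for a
      using pos[of t] by (simp add: field_simps power2_eq_square)
    then show ?thesis unfolding p2_def p_def rel pw3 pw5 m1_def m2_def .
  qed
  have ppos: "p t > 0" for t unfolding p_def using pos[of t] by simp
  have cont: "continuous_on UNIV \<mu>"
    using d1 by (meson DERIV_isCont continuous_at_imp_continuous_on)
  define W where "W = (\<lambda>t. integral {0..t} \<mu> - integral {t..0} \<mu>)"
  have dW: "DERIV W t :> \<mu> t" for t unfolding W_def by (rule antideriv_R[OF cont])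
  define c where "c = W (2*pi) - W 0"
  have Wper: "W (t + 2*pi) = W t + c" for t
  proof -
    have "DERIV (\<lambda>t. W (t + 2*pi) - W t) t :> 0" for t
    proof -
      have "DERIV (\<lambda>t. W (t + 2*pi) - W t) t :> \<mu> (t+2*pi) * (1 + 0) - \<mu> t"
        by (rule DERIV_diff[OF DERIV_chain2[OF dW DERIV_add[OF DERIV_ident DERIV_const]] dW])
      then show ?thesis by (simp add: per)
    qed
    from DERIV_isconst_all[OF allI[OF this], of t 0] show ?thesis by (simp add: c_def)
  qed
  have W0: "W 0 = 0" by (simp add: W_def)
  have W1: "W 0 < W 1"
    by (rule DERIV_pos_imp_increasing[of 0 1 W]) (simp, meson dW pos)
  define q where "q t = p t * W t" for t
  define q1 where "q1 t = p1 t * W t + p t * \<mu> t" for t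
  define q2 where "q2 t = p2 t * W t + 2 * p1 t * \<mu> t + p t * m1 t" for t
  have dq: "DERIV q t :> q1 t" for t unfolding q_def q1_def
    using DERIV_mult[OF dp dW, of t] by (simp add: algebra_simps)
  have dq1: "DERIV q1 t :> q2 t" for t
  proof -
    have dm: "DERIV \<mu> t :> m1 t" using d1[of t] unfolding m1_def .
    show ?thesis unfolding q1_def[abs_def] q2_def
      by (rule DERIV_eqI[OF DERIV_add[OF DERIV_mult[OF dp1 dW] DERIV_mult[OF dp dm]]])
         (simp add: algebra_simps)
  qed
  have hq: "q2 t + \<alpha> t / 2 * q t = 0" for t
  proof -
    have "2 * p1 t * \<mu> t + p t * m1 t = 0"
    proof -
      have "2 * (-1/2 * (a / \<mu> t) * m1 t) * \<mu> t + a * m1 t = 0" for a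
        using pos[of t] by (simp add: field_simps)
      then show ?thesis unfolding p1_def p_def pw3 .
    qed
    then have "q2 t = p2 t * W t" unfolding q2_def by simp
    then have "q2 t + \<alpha> t / 2 * q t = (p2 t + \<alpha> t / 2 * p t) * W t"
      by (simp add: q_def algebra_simps)
    then show ?thesis using hp[of t] by simp
  qed
  define x where "x t = (vector [q t, p t] :: real^2)" for t
  define T where "T = (vector [vector [1, c], vector [0, 1]] :: real^2^2)"
  have hill: "hill_solution \<alpha> (\<lambda>t. x t $ i)" for i
  proof (cases "i = 1")
    case True then show ?thesis unfolding x_def by (simp add: hill_solutionI[OF dq dq1 hq])
  next
    case False then have "i = 2" using exhaust_2 by blast
    then show ?thesis unfolding x_def by (simp add: hill_solutionI[OF dp dp1 hp])
  qed
  have pper: "p (t + 2*pi) = p t" for t unfolding p_def per ..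
  have mono: "x (t + 2*pi) = T *v x t" for t
  proof -
    have m1': "(T *v x t) $ 1 = q t + c * p t" "(T *v x t) $ 2 = p t"
      by (simp_all add: T_def x_def matrix_vector_mult_def sum_2)
    have "q (t + 2*pi) = q t + c * p t" unfolding q_def pper Wper by (simp add: algebra_simps)
    then show ?thesis using m1' pper unfolding vec_eq_iff forall_2 by (simp add: x_def)
  qed
  have indep: "\<forall>a. (\<forall>t. a \<bullet> x t = 0) \<longrightarrow> a = 0"
  proof (intro allI impI)
    fix a :: "real^2" assume h: "\<forall>t. a \<bullet> x t = 0"
    have e: "a $ 1 * q t + a $ 2 * p t = 0" for t
      using h[rule_format, of t] unfolding x_def by (simp add: inner_vec_def sum_2)
    have "a $ 2 = 0" using e[of 0] W0 ppos[of 0] unfolding q_def by simp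
    moreover have "a $ 1 = 0" using e[of 1] W0 W1 ppos[of 1] \<open>a $ 2 = 0\<close> unfolding q_def by simp
    ultimately show "a = 0" by (simp add: vec_eq_iff forall_2)
  qed
  have "is_monodromy \<alpha> T" unfolding is_monodromy_def using hill indep mono by blast
  moreover have "has_eigenvalue_one T" unfolding has_eigenvalue_one_def T_def
    by (rule exI[of _ "vector [1, 0]"])
       (simp add: vec_eq_iff forall_2 matrix_vector_mult_def sum_2)
  ultimately show ?thesis by blast
qed



lemma vd_inner: "(f has_vector_derivative f') F \<Longrightarrow> ((\<lambda>t. f t \<bullet> n) has_real_derivative f' \<bullet> n) F"
  unfolding has_vector_derivative_def has_field_derivative_def
  by (drule bounded_linear.has_derivative[OF bounded_linear_inner_left[of n]]) (simp add: mult_commute_abs inner_scaleR_left)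

lemma norm_cross_le: "norm (a \<times> c) \<le> norm a * norm c"
proof -
  have "(norm (a \<times> c))\<^sup>2 \<le> (norm a * norm c)\<^sup>2" by (metis norm_cross_dot le_add_same_cancel1 zero_le_power2)
  then show ?thesis by (rule power2_le_imp_le) simp
qed

lemma cross_zero_par:
  assumes "a \<noteq> 0" "c \<noteq> 0" "a \<times> c = 0"
  shows "\<exists>l. l \<noteq> 0 \<and> a = l *\<^sub>R c"
proof -
  from assms(3) have "collinear {0, c, a}" unfolding cross_eq_0 by (simp add: insert_commute)
  then obtain l where "a = l *\<^sub>R c" using assms unfolding collinear_lemma by auto
  then show ?thesis using assms(1) by (intro exI[of _ l]) auto
qed

lemma implicit_deriv:
  fixes h \<phi> \<psi> :: "real \<Rightarrow> real"
  assumes B: "open B" "t1 \<in> B" and eq: "\<And>t. t \<in> B \<Longrightarrow> \<phi> (h t) = \<psi> t"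
    and hc: "isCont h t1" and d\<phi>: "DERIV \<phi> (h t1) :> D" and D: "D \<noteq> 0"
    and d\<psi>: "DERIV \<psi> t1 :> E"
  shows "DERIV h t1 :> E / D"
proof -
  obtain g where g: "\<And>z. \<phi> z - \<phi> (h t1) = g z * (z - h t1)" "isCont g (h t1)" "g (h t1) = D"
    using d\<phi> unfolding CARAT_DERIV by blast
  have gc: "isCont (\<lambda>t. g (h t)) t1" using g(2) hc by (rule isCont_o2[rotated])
  then have "((\<lambda>t. g (h t)) \<longlongrightarrow> D) (at t1)" using g(3) by (simp add: isCont_def)
  then have ev1: "\<forall>\<^sub>F t in at t1. g (h t) \<noteq> 0" using D by (rule tendsto_imp_eventually_ne)
  have ev2: "\<forall>\<^sub>F t in at t1. t \<in> B" using B by (rule eventually_at_in_open')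
  have lim\<psi>: "((\<lambda>t. (\<psi> t - \<psi> t1) / (t - t1)) \<longlongrightarrow> E) (at t1)"
    using d\<psi> unfolding has_field_derivative_iff .
  have "((\<lambda>t. ((\<psi> t - \<psi> t1) / (t - t1)) / g (h t)) \<longlongrightarrow> E / D) (at t1)"
    by (rule tendsto_divide[OF lim\<psi> \<open>((\<lambda>t. g (h t)) \<longlongrightarrow> D) (at t1)\<close> D])
  moreover have "\<forall>\<^sub>F t in at t1. ((\<psi> t - \<psi> t1) / (t - t1)) / g (h t) = (h t - h t1) / (t - t1)"
    using ev1 ev2
  proof eventually_elim
    case (elim t)
    have "\<psi> t - \<psi> t1 = g (h t) * (h t - h t1)"
      using g(1)[of "h t"] eq[OF elim(2)] eq[OF B(2)] by simp
    then show ?case using elim(1) by simp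
  qed
  ultimately have "((\<lambda>t. (h t - h t1) / (t - t1)) \<longlongrightarrow> E / D) (at t1)"
    by (rule Lim_transform_eventually)
  then show ?thesis unfolding has_field_derivative_iff .
qed



locale FLsetup =
  fixes y Z :: "real \<Rightarrow> real^3" and \<alpha> \<beta> b :: "real \<Rightarrow> real" and L :: real
  assumes yC: "Ck_vec 3 y" and yper: "\<And>t. y (t + 2*pi) = y t"
    and yeq: "\<And>t. vderiv (vderiv (vderiv y)) t + (2 * \<alpha> t) *\<^sub>R vderiv y t
              + (deriv \<alpha> t) *\<^sub>R y t + (\<beta> t) *\<^sub>R y t = 0"
    and ydet: "\<And>t. det3 (vderiv (vderiv y) t) (vderiv y t) (y t) = 1"
    and ZC: "Ck_vec 3 Z" and Lpos: "L > 0" and Zper: "\<And>s. Z (s + L) = Z s"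
    and Zdet: "\<And>s. det3 (vderiv (vderiv Z) s) (vderiv Z s) (Z s) = 1"
    and Zeq: "\<And>s. vderiv (vderiv (vderiv Z)) s + b s *\<^sub>R Z s = 0"
    and corr: "\<And>t. \<exists>!s. s \<in> {0..<L} \<and> (\<exists>l. l \<noteq> 0 \<and> y t = l *\<^sub>R Z s)"
begin

abbreviation "y1 \<equiv> vderiv y"
abbreviation "y2 \<equiv> vderiv y1"
abbreviation "y3 \<equiv> vderiv y2"
abbreviation "Z1 \<equiv> vderiv Z"
abbreviation "Z2 \<equiv> vderiv Z1"
abbreviation "Z3 \<equiv> vderiv Z2"

lemma dy: "(y has_vector_derivative y1 t) (at t)" "(y1 has_vector_derivative y2 t) (at t)"
   "(y2 has_vector_derivative y3 t) (at t)"
  using Ck3_vec[OF yC] by auto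

lemma dZ: "(Z has_vector_derivative Z1 t) (at t)" "(Z1 has_vector_derivative Z2 t) (at t)"
   "(Z2 has_vector_derivative Z3 t) (at t)"
  using Ck3_vec[OF ZC] by auto

lemma ynz: "y t \<noteq> 0" using ydet[of t] by auto
lemma Znz: "Z s \<noteq> 0" using Zdet[of s] by auto

lemma y3eq: "y3 t = (- 2 * \<alpha> t) *\<^sub>R y1 t - (deriv \<alpha> t + \<beta> t) *\<^sub>R y t"
proof -
  have "y3 t = - ((2 * \<alpha> t) *\<^sub>R y1 t + deriv \<alpha> t *\<^sub>R y t + \<beta> t *\<^sub>R y t)"
    using yeq[of t] by (subst eq_neg_iff_add_eq_0) (simp add: add.assoc)
  then show ?thesis by (simp add: scaleR_add_left)
qed

lemma Z3eq: "Z3 s = - b s *\<^sub>R Z s"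
  using Zeq[of s] by (simp add: eq_neg_iff_add_eq_0)

lemma ycont: "isCont y t" using has_vector_derivative_continuous[OF dy(1)] .
lemma Zcont: "isCont Z s" using has_vector_derivative_continuous[OF dZ(1)] .
lemma Z1cont: "isCont Z1 s" using has_vector_derivative_continuous[OF dZ(2)] .

lemma Zper_nat: "Z (s + real n * L) = Z s" "Z (s - real n * L) = Z s"
proof -
  show "Z (s + real n * L) = Z s"
  proof (induction n)
    case (Suc n) then show ?case using Zper[of "s + real n * L"] by (simp add: algebra_simps)
  qed simp
  show "Z (s - real n * L) = Z s"
  proof (induction n)
    case (Suc n) then show ?case using Zper[of "s - real (Suc n) * L"] by (simp add: algebra_simps)
  qed simp
qed

lemma Zper_int: "Z (s + real_of_int k * L) = Z s"
proof (cases "k \<ge> 0")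
  case True then have "k = int (nat k)" by simp
  then obtain n where "k = int n" by blast
  then show ?thesis using Zper_nat(1) by simp
next
  case False then have "k = - int (nat (-k))" by simp
  then obtain n where "k = - int n" by blast
  then show ?thesis using Zper_nat(2)[of s n] by (simp add: algebra_simps)
qed

lemma Z_reduce: "\<exists>s'. s' \<in> {0..<L} \<and> Z s' = Z s"
proof -
  define k where "k = \<lfloor>s / L\<rfloor>"
  define s' where "s' = s - real_of_int k * L"
  have "real_of_int k \<le> s / L" "s / L < real_of_int k + 1" unfolding k_def by linarith+
  then have "real_of_int k * L \<le> s" "s < real_of_int k * L + L" using Lpos
    by (simp_all add: field_simps)
  then have "s' \<in> {0..<L}" unfolding s'_def by auto
  moreover have "Z s' = Z s" using Zper_int[of s' k] unfolding s'_def by simp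
  ultimately show ?thesis by blast
qed

definition sig :: "real \<Rightarrow> real" where
  "sig t = (THE s. s \<in> {0..<L} \<and> (\<exists>l. l \<noteq> 0 \<and> y t = l *\<^sub>R Z s))"

lemma sig: "sig t \<in> {0..<L}" "\<exists>l. l \<noteq> 0 \<and> y t = l *\<^sub>R Z (sig t)"
  using theI'[OF corr[of t]] unfolding sig_def by auto

lemma sig_unique: "s \<in> {0..<L} \<Longrightarrow> l \<noteq> 0 \<Longrightarrow> y t = l *\<^sub>R Z s \<Longrightarrow> s = sig t"
  using corr[of t] sig by blast

definition Lam :: "real \<Rightarrow> real" where
  "Lam t = (THE m. Z (sig t) = m *\<^sub>R y t)"

lemma Lam: "Z (sig t) = Lam t *\<^sub>R y t" "Lam t \<noteq> 0"
proof -
  obtain l where l: "l \<noteq> 0" "y t = l *\<^sub>R Z (sig t)" using sig(2) by blast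
  then have e: "Z (sig t) = (1/l) *\<^sub>R y t" by simp
  have u: "m = 1/l" if "Z (sig t) = m *\<^sub>R y t" for m
    using that e ynz[of t] by (metis scaleR_cancel_right)
  have "Lam t = 1/l" unfolding Lam_def using e u by (rule the_equality)
  then show "Z (sig t) = Lam t *\<^sub>R y t" "Lam t \<noteq> 0" using e l by auto
qed

lemma Lam_any: assumes "l \<noteq> 0" "y t = l *\<^sub>R Z s" shows "Z s = Lam t *\<^sub>R y t"
proof -
  obtain s' where s': "s' \<in> {0..<L}" "Z s' = Z s" using Z_reduce by blast
  have "s' = sig t" using sig_unique[OF s'(1) assms(1)] assms(2) s'(2) by simp
  then show ?thesis using Lam(1)[of t] s'(2) by simp
qed

lemma sig_per: "sig (t + 2*pi) = sig t" unfolding sig_def yper ..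
lemma Lam_per: "Lam (t + 2*pi) = Lam t" unfolding Lam_def sig_per yper ..

end



context FLsetup begin

lemma CML:
  assumes "\<epsilon> > 0"
  shows "\<exists>\<delta>>0. \<forall>t. \<bar>t - t0\<bar> < \<delta> \<longrightarrow> (\<exists>s l. \<bar>s - sig t0\<bar> < \<epsilon> \<and> l \<noteq> 0 \<and> y t = l *\<^sub>R Z s)"
proof -
  define \<sigma>0 where "\<sigma>0 = sig t0"
  define C where "C = {s. 0 \<le> s \<and> s \<le> L \<and> \<epsilon> \<le> \<bar>s - \<sigma>0\<bar> \<and> \<epsilon> \<le> \<bar>s + L - \<sigma>0\<bar> \<and> \<epsilon> \<le> \<bar>s - L - \<sigma>0\<bar>}"
  have "closed C" unfolding C_def
    by (intro closed_Collect_conj closed_Collect_le continuous_intros)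
  moreover have "bounded C" by (rule bounded_subset[of "{0..L}"]) (auto simp: C_def)
  ultimately have cC: "compact C" by (simp add: compact_eq_bounded_closed)
  define F where "F s = norm (y t0 \<times> Z s)" for s
  have contZ: "continuous_on A Z" for A using Zcont by (simp add: continuous_at_imp_continuous_on)
  have cF: "continuous_on C F" unfolding F_def
    by (intro continuous_intros continuous_on_cross contZ)
  have Fpos: "F s > 0" if "s \<in> C" for s
  proof (rule ccontr)
    assume "\<not> F s > 0"
    then have "y t0 \<times> Z s = 0" unfolding F_def by simp
    from cross_zero_par[OF ynz Znz this] obtain l where l: "l \<noteq> 0" "y t0 = l *\<^sub>R Z s" by blast
    show False
    proof (cases "s < L")
      case True
      then have "s = \<sigma>0" using sig_unique[OF _ l] that unfolding C_def \<sigma>0_def by auto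
      then show False using that assms unfolding C_def by auto
    next
      case False
      then have "s = L" using that unfolding C_def by auto
      then have "y t0 = l *\<^sub>R Z 0" using l Zper[of 0] by simp
      then have "0 = \<sigma>0" using sig_unique[OF _ l(1)] Lpos unfolding \<sigma>0_def by auto
      then show False using that assms \<open>s = L\<close> unfolding C_def by auto
    qed
  qed
  obtain m where m: "m > 0" "\<And>s. s \<in> C \<Longrightarrow> m \<le> F s"
  proof (cases "C = {}")
    case True then show ?thesis by (intro that[of 1]) auto
  next
    case False
    from continuous_attains_inf[OF cC False cF] obtain s0 where "s0 \<in> C" "\<And>s. s \<in> C \<Longrightarrow> F s0 \<le> F s"
      by blast
    then show ?thesis by (intro that[of "F s0"] Fpos) auto
  qed
  have "compact (Z ` {0..L})" by (rule compact_continuous_image[OF contZ compact_Icc])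
  from compact_imp_bounded[OF this] obtain M where M0: "M > 0" "\<forall>x\<in>Z ` {0..L}. norm x \<le> M"
    unfolding bounded_pos by blast
  then have M: "M > 0" "\<And>s. s \<in> {0..L} \<Longrightarrow> norm (Z s) \<le> M" by auto
  obtain \<delta> where \<delta>: "\<delta> > 0" "\<And>t. dist t t0 < \<delta> \<Longrightarrow> dist (y t) (y t0) < m / M"
  proof -
    have "m / M > 0" using m(1) M(1) by simp
    have ce: "\<forall>e>0. \<exists>d>0. \<forall>x'. dist x' t0 < d \<longrightarrow> dist (y x') (y t0) < e"
      using ycont[of t0] unfolding continuous_at_eps_delta .
    from ce[rule_format, OF \<open>m / M > 0\<close>] obtain d where "d > 0" "\<forall>x'. dist x' t0 < d \<longrightarrow> dist (y x') (y t0) < m / M"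
      by blast
    then show ?thesis using that by blast
  qed
  show ?thesis
  proof (rule exI[of _ \<delta>], rule conjI[OF \<delta>(1)], intro allI impI)
    fix t assume t: "\<bar>t - t0\<bar> < \<delta>"
    define s where "s = sig t"
    obtain l where l: "l \<noteq> 0" "y t = l *\<^sub>R Z s" using sig(2) unfolding s_def by blast
    have s: "0 \<le> s" "s < L" using sig(1) unfolding s_def by auto
    have "y t \<times> Z s = 0" using l(2) by (simp add: cross_mult_left)
    then have "y t0 \<times> Z s = (y t0 - y t) \<times> Z s" by (simp add: Cross3.left_diff_distrib)
    then have "F s \<le> norm (y t0 - y t) * norm (Z s)" unfolding F_def using norm_cross_le by simp
    also have "... \<le> norm (y t0 - y t) * M" using M(2)[of s] s by (intro mult_left_mono) auto
    also have "... < m / M * M"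
      using \<delta>(2)[of t] t M(1) by (intro mult_strict_right_mono) (auto simp: dist_norm norm_minus_commute)
    also have "... = m" using M(1) by simp
    finally have "s \<notin> C" using m(2) by force
    then have "\<bar>s - \<sigma>0\<bar> < \<epsilon> \<or> \<bar>(s + L) - \<sigma>0\<bar> < \<epsilon> \<or> \<bar>(s - L) - \<sigma>0\<bar> < \<epsilon>"
      using s unfolding C_def by auto
    moreover have "y t = l *\<^sub>R Z (s + L)" using l(2) Zper[of s] by simp
    moreover have "y t = l *\<^sub>R Z (s - L)" using l(2) Zper_nat(2)[of s 1] by simp
    ultimately show "\<exists>s l. \<bar>s - sig t0\<bar> < \<epsilon> \<and> l \<noteq> 0 \<and> y t = l *\<^sub>R Z s"
      using l unfolding \<sigma>0_def by blast
  qed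
qed

end



lemma cont_pos_nbhd:
  fixes f :: "real \<Rightarrow> real"
  assumes "isCont f x" "f x > 0"
  shows "\<exists>d>0. \<forall>s. \<bar>s - x\<bar> < d \<longrightarrow> f s > 0"
proof -
  have "\<forall>\<^sub>F s in at x. f s > 0"
    using assms order_tendstoD(1)[of f "f x" "at x" 0] unfolding isCont_def by blast
  then obtain d where d: "d > 0" "\<And>s. s \<noteq> x \<Longrightarrow> dist s x < d \<Longrightarrow> f s > 0"
    unfolding eventually_at by blast
  show ?thesis
  proof (rule exI[of _ d], intro conjI allI impI d(1))
    fix s assume "\<bar>s - x\<bar> < d"
    then show "f s > 0" using d(2)[of s] assms(2) by (cases "s = x") (auto simp: dist_real_def)
  qed
qed

lemma DERIV_deriv_self: "DERIV f x :> X \<Longrightarrow> DERIV f x :> deriv f x"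
  using DERIV_imp_deriv by metis

lemma C2_transfer:
  fixes f F F1 :: "real \<Rightarrow> real"
  assumes B: "open B" "t \<in> B" and eq: "\<And>s. s \<in> B \<Longrightarrow> f s = F s"
    and d: "\<And>s. s \<in> B \<Longrightarrow> DERIV F s :> F1 s" and d2: "F1 differentiable (at t)"
  shows "DERIV f t :> deriv f t" "DERIV (deriv f) t :> deriv (deriv f) t"
proof -
  have df: "DERIV f s :> F1 s" if "s \<in> B" for s
    by (rule has_field_derivative_transform_within_open[OF d[OF that] B(1) that]) (simp add: eq)
  then show "DERIV f t :> deriv f t" using B(2) by (meson DERIV_deriv_self)
  have e: "F1 s = deriv f s" if "s \<in> B" for s using DERIV_imp_deriv[OF df[OF that]] by simp
  from d2 obtain D where "DERIV F1 t :> D" unfolding real_differentiable_def by blast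
  then have "DERIV (deriv f) t :> D"
    by (rule has_field_derivative_transform_within_open[OF _ B(1) B(2)]) (simp add: e)
  then show "DERIV (deriv f) t :> deriv (deriv f) t" by (rule DERIV_deriv_self)
qed



context FLsetup begin

lemma local_h:
  "\<exists>\<delta>>0. \<exists>h. \<forall>t\<in>ball t0 \<delta>. Z (h t) = Lam t *\<^sub>R y t \<and> DERIV h t :> deriv h t
      \<and> DERIV (deriv h) t :> deriv (deriv h) t \<and> DERIV Lam t :> deriv Lam t
      \<and> DERIV (deriv Lam) t :> deriv (deriv Lam) t"
proof -
  define \<sigma>0 where "\<sigma>0 = sig t0"
  define z0 where "z0 = Z \<sigma>0"
  define z1 where "z1 = Z1 \<sigma>0"
  define nf where "nf = z0"
  define ng where "ng = (z0 \<bullet> z0) *\<^sub>R z1 - (z1 \<bullet> z0) *\<^sub>R z0"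
  have z0nz: "z0 \<noteq> 0" unfolding z0_def by (rule Znz)
  have z0pos: "z0 \<bullet> z0 > 0" using z0nz by simp
  have ngnz: "ng \<noteq> 0"
  proof
    assume "ng = 0"
    then have "(z0 \<bullet> z0) *\<^sub>R z1 = (z1 \<bullet> z0) *\<^sub>R z0" unfolding ng_def by simp
    then have "inverse (z0 \<bullet> z0) *\<^sub>R ((z0 \<bullet> z0) *\<^sub>R z1) = inverse (z0 \<bullet> z0) *\<^sub>R ((z1 \<bullet> z0) *\<^sub>R z0)"
      by simp
    then have "z1 = (inverse (z0 \<bullet> z0) * (z1 \<bullet> z0)) *\<^sub>R z0" using z0pos by simp
    then obtain c where "z1 = c *\<^sub>R z0" by blast
    then have "det3 (Z2 \<sigma>0) z1 z0 = 0" by simp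
    with Zdet[of \<sigma>0] show False unfolding z0_def z1_def by simp
  qed
  have z0ng: "z0 \<bullet> ng = 0" unfolding ng_def by (simp add: inner_diff_right inner_commute)
  have z1ng: "z1 \<bullet> ng = (z0 \<bullet> z0) * (z1 \<bullet> z1) - (z1 \<bullet> z0) * (z1 \<bullet> z0)"
    unfolding ng_def by (simp add: inner_diff_right inner_commute)
  have ngng: "ng \<bullet> ng = (z0 \<bullet> z0) * ((z0 \<bullet> z0) * (z1 \<bullet> z1) - (z1 \<bullet> z0) * (z1 \<bullet> z0))"
    unfolding ng_def by (simp add: inner_diff_right inner_diff_left inner_commute algebra_simps)
  have z1ngpos: "z1 \<bullet> ng > 0"
  proof -
    have "ng \<bullet> ng > 0" using ngnz by simp
    then show ?thesis unfolding z1ng using ngng z0pos by (simp add: zero_less_mult_iff)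
  qed
  define fZ where "fZ s = Z s \<bullet> nf" for s
  define gZ where "gZ s = Z s \<bullet> ng" for s
  define \<phi> where "\<phi> s = gZ s / fZ s" for s
  define \<phi>1 where "\<phi>1 s = ((Z1 s \<bullet> ng) * fZ s - gZ s * (Z1 s \<bullet> nf)) / (fZ s * fZ s)" for s
  have d\<phi>: "DERIV \<phi> s :> \<phi>1 s" if "fZ s \<noteq> 0" for s
    unfolding \<phi>_def[abs_def] \<phi>1_def fZ_def gZ_def
    by (rule DERIV_divide[OF vd_inner[OF dZ(1)] vd_inner[OF dZ(1)]]) (use that in \<open>simp add: fZ_def\<close>)
  have fZ0: "fZ \<sigma>0 = z0 \<bullet> z0" unfolding fZ_def nf_def z0_def ..
  have \<phi>1\<sigma>0: "\<phi>1 \<sigma>0 > 0"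
  proof -
    have "gZ \<sigma>0 = 0" using z0ng unfolding gZ_def z0_def .
    then have "\<phi>1 \<sigma>0 = (z1 \<bullet> ng) / (z0 \<bullet> z0)" unfolding \<phi>1_def fZ0 z1_def using z0pos by simp
    then show ?thesis using z1ngpos z0pos by simp
  qed
  have cfZ: "isCont fZ \<sigma>0" unfolding fZ_def[abs_def] by (intro continuous_intros Zcont)
  have c\<phi>1: "isCont \<phi>1 \<sigma>0" unfolding \<phi>1_def[abs_def] fZ_def gZ_def
    using z0pos unfolding z0_def nf_def by (intro continuous_intros Zcont Z1cont) simp
  obtain d1 where d1: "d1 > 0" "\<And>s. \<bar>s - \<sigma>0\<bar> < d1 \<Longrightarrow> fZ s > 0"
    using cont_pos_nbhd[OF cfZ] fZ0 z0pos by auto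
  obtain d2 where d2: "d2 > 0" "\<And>s. \<bar>s - \<sigma>0\<bar> < d2 \<Longrightarrow> \<phi>1 s > 0"
    using cont_pos_nbhd[OF c\<phi>1 \<phi>1\<sigma>0] by auto
  define \<epsilon>1 where "\<epsilon>1 = min d1 d2"
  have \<epsilon>1: "\<epsilon>1 > 0" "\<And>s. \<bar>s - \<sigma>0\<bar> < \<epsilon>1 \<Longrightarrow> fZ s > 0 \<and> \<phi>1 s > 0"
    using d1 d2 unfolding \<epsilon>1_def by auto
  define R where "R = {s. \<bar>s - \<sigma>0\<bar> < \<epsilon>1}"
  have mono: "\<phi> a < \<phi> b" if "a \<in> R" "b \<in> R" "a < b" for a b
  proof (rule DERIV_pos_imp_increasing[OF that(3)])
    fix x assume "a \<le> x" "x \<le> b"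
    then have "\<bar>x - \<sigma>0\<bar> < \<epsilon>1" using that unfolding R_def by auto
    then show "\<exists>y. DERIV \<phi> x :> y \<and> y > 0" using \<epsilon>1(2) d\<phi> by (metis less_irrefl)
  qed
  have inj: "inj_on \<phi> R"
  proof (rule inj_onI)
    fix a b assume "a \<in> R" "b \<in> R" "\<phi> a = \<phi> b"
    then show "a = b" using mono[of a b] mono[of b a] by (cases a b rule: linorder_cases) auto
  qed
  define g where "g = the_inv_into R \<phi>"
  have g\<phi>: "g (\<phi> s) = s" if "s \<in> R" for s unfolding g_def by (rule the_inv_into_f_f[OF inj that])
  define \<epsilon> where "\<epsilon> = \<epsilon>1 / 2"
  have \<epsilon>: "\<epsilon> > 0" "\<epsilon> < \<epsilon>1" using \<epsilon>1 unfolding \<epsilon>_def by auto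
  obtain \<delta> where \<delta>: "\<delta> > 0" "\<And>t. \<bar>t - t0\<bar> < \<delta> \<Longrightarrow> \<exists>s l. \<bar>s - sig t0\<bar> < \<epsilon> \<and> l \<noteq> 0 \<and> y t = l *\<^sub>R Z s"
    using CML[OF \<epsilon>(1), of t0] by blast
  define \<psi> where "\<psi> t = (y t \<bullet> ng) / (y t \<bullet> nf)" for t
  define \<psi>1 where "\<psi>1 t = ((y1 t \<bullet> ng) * (y t \<bullet> nf) - (y t \<bullet> ng) * (y1 t \<bullet> nf)) / ((y t \<bullet> nf) * (y t \<bullet> nf))" for t
  define h where "h t = g (\<psi> t)" for t
  define B where "B = ball t0 \<delta>"
  have oB: "open B" unfolding B_def by simp
  have key: "\<bar>h t - \<sigma>0\<bar> < \<epsilon> \<and> y t \<bullet> nf \<noteq> 0 \<and> \<phi> (h t) = \<psi> t \<and> Z (h t) = Lam t *\<^sub>R y t"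
    if "t \<in> B" for t
  proof -
    have "\<bar>t - t0\<bar> < \<delta>" using that unfolding B_def by (simp add: dist_real_def abs_minus_commute)
    then obtain s l where sl: "\<bar>s - \<sigma>0\<bar> < \<epsilon>" "l \<noteq> 0" "y t = l *\<^sub>R Z s"
      using \<delta>(2) unfolding \<sigma>0_def by blast
    have sR: "s \<in> R" using sl(1) \<epsilon> unfolding R_def by simp
    have fs: "fZ s > 0" using \<epsilon>1(2)[of s] sR unfolding R_def by simp
    have yf: "y t \<bullet> nf = l * fZ s" unfolding fZ_def sl(3) by simp
    have yg: "y t \<bullet> ng = l * gZ s" unfolding gZ_def sl(3) by simp
    have "\<psi> t = \<phi> s" unfolding \<psi>_def \<phi>_def yf yg using sl(2) by simp
    then have hs: "h t = s" unfolding h_def using g\<phi>[OF sR] by simp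
    show ?thesis using sl fs yf \<open>\<psi> t = \<phi> s\<close> Lam_any[OF sl(2,3)] unfolding hs by simp
  qed
  have hR: "h t \<in> R" if "t \<in> B" for t using key[OF that] \<epsilon> unfolding R_def by simp
  have d\<psi>: "DERIV \<psi> t :> \<psi>1 t" if "t \<in> B" for t
    unfolding \<psi>_def[abs_def] \<psi>1_def
    by (rule DERIV_divide[OF vd_inner[OF dy(1)] vd_inner[OF dy(1)]]) (use key[OF that] in simp)
  have hcont: "isCont h t" if "t \<in> B" for t
  proof -
    define x where "x = h t"
    define d where "d = \<epsilon> - \<bar>x - \<sigma>0\<bar>"
    have d: "d > 0" using key[OF that] unfolding d_def x_def by simp
    have zR: "z \<in> R" if "\<bar>z - x\<bar> \<le> d" for z
      using that \<epsilon> abs_triangle_ineq[of "z - x" "x - \<sigma>0"] unfolding d_def R_def by simp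
    have "isCont g (\<phi> x)"
    proof (rule isCont_inverse_function[where f=\<phi> and g=g and x=x and d=d, OF d])
      fix z assume "\<bar>z - x\<bar> \<le> d"
      then have "z \<in> R" by (rule zR)
      then show "g (\<phi> z) = z" by (rule g\<phi>)
      have "fZ z \<noteq> 0" using \<epsilon>1(2)[of z] \<open>z \<in> R\<close> unfolding R_def by simp
      then show "isCont \<phi> z" using d\<phi> by (metis DERIV_isCont)
    qed
    then have "isCont g (\<psi> t)" using key[OF that] unfolding x_def by simp
    then show ?thesis unfolding h_def[abs_def] using isCont_o2[OF DERIV_isCont[OF d\<psi>[OF that]]] by blast
  qed
  have fZh: "fZ (h t) > 0" "\<phi>1 (h t) > 0" if "t \<in> B" for t
    using \<epsilon>1(2)[of "h t"] hR[OF that] unfolding R_def by auto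
  have dh: "DERIV h t :> \<psi>1 t / \<phi>1 (h t)" if "t \<in> B" for t
    by (rule implicit_deriv[OF oB that _ hcont[OF that] d\<phi> _ d\<psi>[OF that]])
       (use key fZh[OF that] in auto)
  have diffy: "y differentiable (at t)" "y1 differentiable (at t)" for t
    using dy by (auto intro: differentiableI_vector)
  have diffZ: "Z differentiable (at t)" "Z1 differentiable (at t)" for t
    using dZ by (auto intro: differentiableI_vector)
  have hdiff: "h differentiable (at t)" if "t \<in> B" for t
    using dh[OF that] unfolding real_differentiable_def by blast
  have diffZh: "(\<lambda>s. Z (h s)) differentiable (at t)" "(\<lambda>s. Z1 (h s)) differentiable (at t)"
    if "t \<in> B" for t
    using differentiable_compose[OF diffZ(1) hdiff[OF that]] differentiable_compose[OF diffZ(2) hdiff[OF that]]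
    by auto
  have Q: "(\<lambda>s. \<psi>1 s / \<phi>1 (h s)) differentiable (at t)" if "t \<in> B" for t
  proof -
    have n1: "y t \<bullet> nf * (y t \<bullet> nf) \<noteq> 0" using key[OF that] by simp
    have n2: "Z (h t) \<bullet> nf * (Z (h t) \<bullet> nf) \<noteq> 0" using fZh[OF that] unfolding fZ_def by simp
    have n3: "((Z1 (h t) \<bullet> ng) * (Z (h t) \<bullet> nf) - (Z (h t) \<bullet> ng) * (Z1 (h t) \<bullet> nf)) /
        (Z (h t) \<bullet> nf * (Z (h t) \<bullet> nf)) \<noteq> 0"
    proof -
      have "\<phi>1 (h t) \<noteq> 0" using fZh(2)[OF that] by simp
      then show ?thesis unfolding \<phi>1_def fZ_def gZ_def .
    qed
    show ?thesis unfolding \<psi>1_def \<phi>1_def fZ_def gZ_def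
      using n1 n2 n3 diffy diffZh[OF that] by simp
  qed
  have Ch: "DERIV h t :> deriv h t" "DERIV (deriv h) t :> deriv (deriv h) t" if "t \<in> B" for t
    using C2_transfer[OF oB that, of h h "\<lambda>s. \<psi>1 s / \<phi>1 (h s)"] dh Q[OF that] by auto
  define LQ where "LQ s = (Z (h s) \<bullet> nf) / (y s \<bullet> nf)" for s
  define LQ1 where "LQ1 s = ((deriv h s * (Z1 (h s) \<bullet> nf)) * (y s \<bullet> nf) - (Z (h s) \<bullet> nf) * (y1 s \<bullet> nf))
     / ((y s \<bullet> nf) * (y s \<bullet> nf))" for s
  have LQeq: "Lam s = LQ s" if "s \<in> B" for s
  proof -
    have "Z (h s) \<bullet> nf = Lam s * (y s \<bullet> nf)" using key[OF that] by simp
    then show ?thesis unfolding LQ_def using key[OF that] by simp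
  qed
  have dZh: "DERIV (\<lambda>s. Z (h s) \<bullet> nf) s :> deriv h s * (Z1 (h s) \<bullet> nf)" if "s \<in> B" for s
  proof -
    have hv: "(h has_vector_derivative deriv h s) (at s)"
      using Ch(1)[OF that] by (simp add: has_real_derivative_iff_has_vector_derivative)
    show ?thesis using vd_inner[OF vector_diff_chain_at[OF hv dZ(1)], of nf] by (simp add: o_def)
  qed
  have dLQ: "DERIV LQ s :> LQ1 s" if "s \<in> B" for s
    unfolding LQ_def[abs_def] LQ1_def
    by (rule DERIV_divide[OF dZh[OF that] vd_inner[OF dy(1)]]) (use key[OF that] in simp)
  have LQ1d: "LQ1 differentiable (at t)" if "t \<in> B" for t
  proof -
    have n1: "y t \<bullet> nf * (y t \<bullet> nf) \<noteq> 0" using key[OF that] by simp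
    have "deriv h differentiable (at t)" using Ch(2)[OF that] unfolding real_differentiable_def by blast
    then show ?thesis unfolding LQ1_def[abs_def] using n1 diffy diffZh[OF that] by simp
  qed
  have CL: "DERIV Lam t :> deriv Lam t" "DERIV (deriv Lam) t :> deriv (deriv Lam) t" if "t \<in> B" for t
    using C2_transfer[OF oB that, of Lam LQ LQ1] LQeq dLQ LQ1d[OF that] by auto
  show ?thesis
    by (rule exI[of _ \<delta>], rule conjI[OF \<delta>(1)], rule exI[of _ h])
       (use key Ch CL in \<open>auto simp: B_def\<close>)
qed

end



lemma cube_inj: "(a::real) ^ 3 = b ^ 3 \<Longrightarrow> a = b"
  by (metis odd_real_root_power_cancel odd_numeral)

lemma const_sign:
  fixes f :: "real \<Rightarrow> real"
  assumes c: "continuous_on UNIV f" and nz: "\<And>t. f t \<noteq> 0"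
  shows "f t * f 0 > 0"
proof (rule ccontr)
  assume "\<not> f t * f 0 > 0"
  then have neg: "f t * f 0 < 0" using nz[of t] nz[of 0] by (simp add: not_less order.order_iff_strict)
  define a where "a = min t 0"
  define b where "b = max t 0"
  have ab: "a \<le> b" unfolding a_def b_def by simp
  have co: "continuous_on {a..b} f" using c by (rule continuous_on_subset) simp
  have "(f a \<le> 0 \<and> 0 \<le> f b) \<or> (f b \<le> 0 \<and> 0 \<le> f a)"
    using neg unfolding a_def b_def by (cases "t \<le> 0") (auto simp: mult_less_0_iff min_def max_def)
  then obtain x where "f x = 0"
    using IVT'[OF _ _ ab co, of 0] IVT2'[OF _ _ ab co, of 0] by blast
  then show False using nz by blast
qed

context FLsetup begin

lemma local_rel:
  "DERIV Lam t0 :> deriv Lam t0 \<and> DERIV (deriv Lam) t0 :> deriv (deriv Lam) t0 \<and>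
   \<alpha> t0 = deriv (deriv Lam) t0 / Lam t0 - 3/2 * (deriv Lam t0 / Lam t0)^2"
proof -
  obtain \<delta> h where \<delta>: "\<delta> > 0" and H: "\<And>t. t \<in> ball t0 \<delta> \<Longrightarrow> Z (h t) = Lam t *\<^sub>R y t \<and> DERIV h t :> deriv h t
      \<and> DERIV (deriv h) t :> deriv (deriv h) t \<and> DERIV Lam t :> deriv Lam t
      \<and> DERIV (deriv Lam) t :> deriv (deriv Lam) t"
    using local_h[of t0] by blast
  define B where "B = ball t0 \<delta>"
  have oB: "open B" unfolding B_def by simp
  have t0B: "t0 \<in> B" unfolding B_def using \<delta> by simp
  define h1 where "h1 = deriv h"
  define h2 where "h2 = deriv (deriv h)"
  define L1 where "L1 = deriv Lam"
  define L2 where "L2 = deriv (deriv Lam)"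
  have ZhB: "Z (h t) = Lam t *\<^sub>R y t" if "t \<in> B" for t using H[of t] that unfolding B_def by blast
  have dh: "DERIV h t :> h1 t" "DERIV h1 t :> h2 t" if "t \<in> B" for t
    using H[of t] that unfolding B_def h1_def h2_def by blast+
  have dL: "DERIV Lam t :> L1 t" "DERIV L1 t :> L2 t" if "t \<in> B" for t
    using H[of t] that unfolding B_def L1_def L2_def by blast+
  have Lnz: "Lam t \<noteq> 0" for t by (rule Lam(2))
  have hv: "(h has_vector_derivative h1 t) (at t)" if "t \<in> B" for t
    using dh(1)[OF that] by (simp add: has_real_derivative_iff_has_vector_derivative)
  have dZh: "((\<lambda>s. Z (h s)) has_vector_derivative h1 t *\<^sub>R Z1 (h t)) (at t)"
       "((\<lambda>s. Z1 (h s)) has_vector_derivative h1 t *\<^sub>R Z2 (h t)) (at t)"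
       "((\<lambda>s. Z2 (h s)) has_vector_derivative h1 t *\<^sub>R Z3 (h t)) (at t)" if "t \<in> B" for t
    using vector_diff_chain_at[OF hv[OF that] dZ(1)] vector_diff_chain_at[OF hv[OF that] dZ(2)]
      vector_diff_chain_at[OF hv[OF that] dZ(3)] by (simp_all add: o_def)
  have dLy: "((\<lambda>s. Lam s *\<^sub>R y s) has_vector_derivative Lam t *\<^sub>R y1 t + L1 t *\<^sub>R y t) (at t)"
    if "t \<in> B" for t
    by (rule has_vector_derivative_scaleR[OF dL(1)[OF that] dy(1)])
  have E1: "h1 t *\<^sub>R Z1 (h t) = Lam t *\<^sub>R y1 t + L1 t *\<^sub>R y t" if "t \<in> B" for t
  proof -
    have "((\<lambda>s. Z (h s)) has_vector_derivative Lam t *\<^sub>R y1 t + L1 t *\<^sub>R y t) (at t)"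
      by (rule has_vector_derivative_transform_within_open[OF dLy[OF that] oB that]) (simp add: ZhB)
    then show ?thesis using dZh(1)[OF that] by (rule vector_derivative_unique_at[rotated])
  qed
  have E2: "h1 t *\<^sub>R (h1 t *\<^sub>R Z2 (h t)) + h2 t *\<^sub>R Z1 (h t)
      = (Lam t *\<^sub>R y2 t + L1 t *\<^sub>R y1 t) + (L1 t *\<^sub>R y1 t + L2 t *\<^sub>R y t)" if "t \<in> B" for t
  proof -
    have a: "((\<lambda>s. h1 s *\<^sub>R Z1 (h s)) has_vector_derivative
        h1 t *\<^sub>R (h1 t *\<^sub>R Z2 (h t)) + h2 t *\<^sub>R Z1 (h t)) (at t)"
      by (rule has_vector_derivative_scaleR[OF dh(2)[OF that] dZh(2)[OF that]])
    have b: "((\<lambda>s. Lam s *\<^sub>R y1 s + L1 s *\<^sub>R y s) has_vector_derivative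
        (Lam t *\<^sub>R y2 t + L1 t *\<^sub>R y1 t) + (L1 t *\<^sub>R y1 t + L2 t *\<^sub>R y t)) (at t)"
      by (rule has_vector_derivative_add[OF has_vector_derivative_scaleR[OF dL(1)[OF that] dy(2)]
             has_vector_derivative_scaleR[OF dL(2)[OF that] dy(1)]])
    have "((\<lambda>s. h1 s *\<^sub>R Z1 (h s)) has_vector_derivative
        (Lam t *\<^sub>R y2 t + L1 t *\<^sub>R y1 t) + (L1 t *\<^sub>R y1 t + L2 t *\<^sub>R y t)) (at t)"
      by (rule has_vector_derivative_transform_within_open[OF b oB that]) (simp add: E1)
    then show ?thesis using a by (rule vector_derivative_unique_at[rotated])
  qed
  have h1L: "h1 t = Lam t" if "t \<in> B" for t
  proof -
    have "h1 t ^ 3 = det3 (h1 t *\<^sub>R (h1 t *\<^sub>R Z2 (h t)) + h2 t *\<^sub>R Z1 (h t)) (h1 t *\<^sub>R Z1 (h t)) (Z (h t))"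
      using Zdet[of "h t"] by (simp add: power3_eq_cube)
    also have "... = det3 ((Lam t *\<^sub>R y2 t + L1 t *\<^sub>R y1 t) + (L1 t *\<^sub>R y1 t + L2 t *\<^sub>R y t))
        (Lam t *\<^sub>R y1 t + L1 t *\<^sub>R y t) (Lam t *\<^sub>R y t)"
      by (simp only: E1[OF that] E2[OF that] ZhB[OF that])
    also have "... = Lam t ^ 3"
      by (simp only: det3_add1 det3_add2 det3_add3 det3_scale1 det3_scale2 det3_scale3 det3_same)
         (simp add: power3_eq_cube ydet)
    finally show ?thesis by (rule cube_inj)
  qed
  have h2L: "h2 t = L1 t" if "t \<in> B" for t
  proof -
    have "DERIV Lam t :> h2 t"
      by (rule has_field_derivative_transform_within_open[OF dh(2)[OF that] oB that]) (simp add: h1L)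
    then show ?thesis using dL(1)[OF that] by (rule DERIV_unique)
  qed
  have E1': "Lam t *\<^sub>R Z1 (h t) = Lam t *\<^sub>R y1 t + L1 t *\<^sub>R y t" if "t \<in> B" for t
    using E1[OF that] h1L[OF that] by simp
  have E2': "Lam t *\<^sub>R (Lam t *\<^sub>R Z2 (h t)) + L1 t *\<^sub>R Z1 (h t)
      = (Lam t *\<^sub>R y2 t + L1 t *\<^sub>R y1 t) + (L1 t *\<^sub>R y1 t + L2 t *\<^sub>R y t)" if "t \<in> B" for t
    using E2[OF that] h1L[OF that] h2L[OF that] by simp
  have c1: "det3 (y1 t) (y2 t) (y t) = -1" for t using ydet[of t] det3_swap12[of "y2 t" "y1 t" "y t"] by simp
  have c2: "det3 (y t) (y2 t) (y1 t) = 1" for t using ydet[of t] by (simp add: det3_expand algebra_simps)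
  have D1: "det3 (Z1 (h t)) (y2 t) (y t) = -1" if "t \<in> B" for t
  proof -
    have "Lam t * det3 (Z1 (h t)) (y2 t) (y t) = det3 (Lam t *\<^sub>R Z1 (h t)) (y2 t) (y t)" by simp
    also have "... = det3 (Lam t *\<^sub>R y1 t + L1 t *\<^sub>R y t) (y2 t) (y t)" by (simp only: E1'[OF that])
    also have "... = Lam t * (-1)" by (simp add: c1)
    finally show ?thesis using mult_left_cancel[OF Lnz[of t]] by blast
  qed
  have D2: "det3 (Z1 (h t)) (y1 t) (y t) = 0" if "t \<in> B" for t
  proof -
    have "Lam t * det3 (Z1 (h t)) (y1 t) (y t) = det3 (Lam t *\<^sub>R Z1 (h t)) (y1 t) (y t)" by simp
    also have "... = det3 (Lam t *\<^sub>R y1 t + L1 t *\<^sub>R y t) (y1 t) (y t)" by (simp only: E1'[OF that])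
    also have "... = 0" by simp
    finally show ?thesis using Lnz[of t] by simp
  qed
  have D3: "det3 (Z1 (h t)) (y2 t) (y1 t) = L1 t / Lam t" if "t \<in> B" for t
  proof -
    have "Lam t * det3 (Z1 (h t)) (y2 t) (y1 t) = det3 (Lam t *\<^sub>R Z1 (h t)) (y2 t) (y1 t)" by simp
    also have "... = det3 (Lam t *\<^sub>R y1 t + L1 t *\<^sub>R y t) (y2 t) (y1 t)" by (simp only: E1'[OF that])
    also have "... = L1 t" by (simp add: c2)
    finally show ?thesis using Lnz[of t] by (simp add: field_simps)
  qed
  have Vv: "det3 (Z2 (h t)) (y2 t) (y t) = - L1 t / (Lam t * Lam t)" if "t \<in> B" for t
  proof -
    have "Lam t * Lam t * det3 (Z2 (h t)) (y2 t) (y t) + L1 t * det3 (Z1 (h t)) (y2 t) (y t)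
        = det3 (Lam t *\<^sub>R (Lam t *\<^sub>R Z2 (h t)) + L1 t *\<^sub>R Z1 (h t)) (y2 t) (y t)" by simp
    also have "... = det3 ((Lam t *\<^sub>R y2 t + L1 t *\<^sub>R y1 t) + (L1 t *\<^sub>R y1 t + L2 t *\<^sub>R y t)) (y2 t) (y t)"
      by (simp only: E2'[OF that])
    also have "... = - 2 * L1 t" by (simp only: det3_add1 det3_scale1 det3_same) (simp add: c1)
    finally show ?thesis using Lnz[of t] D1[OF that] by (simp add: field_simps)
  qed
  have U: "det3 (Z2 (h t0)) (y1 t0) (y t0) = 1 / Lam t0"
  proof -
    have "Lam t0 * Lam t0 * det3 (Z2 (h t0)) (y1 t0) (y t0) + L1 t0 * det3 (Z1 (h t0)) (y1 t0) (y t0)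
        = det3 (Lam t0 *\<^sub>R (Lam t0 *\<^sub>R Z2 (h t0)) + L1 t0 *\<^sub>R Z1 (h t0)) (y1 t0) (y t0)" by simp
    also have "... = det3 ((Lam t0 *\<^sub>R y2 t0 + L1 t0 *\<^sub>R y1 t0) + (L1 t0 *\<^sub>R y1 t0 + L2 t0 *\<^sub>R y t0)) (y1 t0) (y t0)"
      by (simp only: E2'[OF t0B])
    also have "... = Lam t0" by (simp only: det3_add1 det3_scale1 det3_same) (simp add: ydet)
    finally show ?thesis using Lnz[of t0] D2[OF t0B] by (simp add: field_simps)
  qed
  have W: "det3 (Z2 (h t0)) (y2 t0) (y1 t0) = (L2 t0 - L1 t0 * L1 t0 / Lam t0) / (Lam t0 * Lam t0)"
  proof -
    have "Lam t0 * Lam t0 * det3 (Z2 (h t0)) (y2 t0) (y1 t0) + L1 t0 * det3 (Z1 (h t0)) (y2 t0) (y1 t0)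
        = det3 (Lam t0 *\<^sub>R (Lam t0 *\<^sub>R Z2 (h t0)) + L1 t0 *\<^sub>R Z1 (h t0)) (y2 t0) (y1 t0)" by simp
    also have "... = det3 ((Lam t0 *\<^sub>R y2 t0 + L1 t0 *\<^sub>R y1 t0) + (L1 t0 *\<^sub>R y1 t0 + L2 t0 *\<^sub>R y t0)) (y2 t0) (y1 t0)"
      by (simp only: E2'[OF t0B])
    also have "... = L2 t0" by (simp only: det3_add1 det3_scale1 det3_same) (simp add: c2)
    finally show ?thesis using Lnz[of t0] D3[OF t0B] by (simp add: field_simps)
  qed
  have T1: "det3 (h1 t0 *\<^sub>R Z3 (h t0)) (y2 t0) (y t0) = 0"
    by (simp add: Z3eq ZhB[OF t0B])
  have T2: "det3 (Z2 (h t0)) (y3 t0) (y t0) = - 2 * \<alpha> t0 * (1 / Lam t0)"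
    by (simp add: y3eq U)
  have dv1: "DERIV (\<lambda>s. det3 (Z2 (h s)) (y2 s) (y s)) t0 :>
      det3 (h1 t0 *\<^sub>R Z3 (h t0)) (y2 t0) (y t0) + det3 (Z2 (h t0)) (y3 t0) (y t0)
      + det3 (Z2 (h t0)) (y2 t0) (y1 t0)"
    by (rule det3_deriv[OF dZh(3)[OF t0B] dy(3) dy(1)])
  have dv2: "DERIV (\<lambda>s. (- L1 s) / (Lam s * Lam s)) t0 :>
      ((- L2 t0) * (Lam t0 * Lam t0) - (- L1 t0) * (L1 t0 * Lam t0 + L1 t0 * Lam t0)) / ((Lam t0 * Lam t0) * (Lam t0 * Lam t0))"
    by (rule DERIV_divide[OF DERIV_minus[OF dL(2)[OF t0B]] DERIV_mult[OF dL(1)[OF t0B] dL(1)[OF t0B]]])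
       (simp add: Lnz)
  have dv3: "DERIV (\<lambda>s. det3 (Z2 (h s)) (y2 s) (y s)) t0 :>
      ((- L2 t0) * (Lam t0 * Lam t0) - (- L1 t0) * (L1 t0 * Lam t0 + L1 t0 * Lam t0)) / ((Lam t0 * Lam t0) * (Lam t0 * Lam t0))"
    by (rule has_field_derivative_transform_within_open[OF dv2 oB t0B]) (simp add: Vv)
  have eq: "- 2 * \<alpha> t0 * (1 / Lam t0) + (L2 t0 - L1 t0 * L1 t0 / Lam t0) / (Lam t0 * Lam t0) =
      ((- L2 t0) * (Lam t0 * Lam t0) - (- L1 t0) * (L1 t0 * Lam t0 + L1 t0 * Lam t0)) / ((Lam t0 * Lam t0) * (Lam t0 * Lam t0))"
    using DERIV_unique[OF dv1 dv3] unfolding T1 T2 W by simp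
  have "\<alpha> t0 = L2 t0 / Lam t0 - 3/2 * (L1 t0 / Lam t0)^2"
  proof -
    have e2: "Lam t0 * (2 * L2 t0 * Lam t0) = Lam t0 * (3 * L1 t0 * L1 t0 + 2 * \<alpha> t0 * Lam t0 * Lam t0)"
      using eq Lnz[of t0] by (simp add: field_simps)
    then have e3: "2 * L2 t0 * Lam t0 = 3 * L1 t0 * L1 t0 + 2 * \<alpha> t0 * Lam t0 * Lam t0"
      using mult_left_cancel[OF Lnz[of t0]] by blast
    show ?thesis using e3 Lnz[of t0] by (simp add: field_simps power2_eq_square)
  qed
  then show ?thesis using dL[OF t0B] unfolding L1_def L2_def by simp
qed

lemma mu_exists:
  "\<exists>\<mu>. (\<forall>t. \<mu> t > 0) \<and> (\<forall>t. \<mu> (t + 2*pi) = \<mu> t) \<and> (\<forall>t. DERIV \<mu> t :> deriv \<mu> t)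
      \<and> (\<forall>t. DERIV (deriv \<mu>) t :> deriv (deriv \<mu>) t)
      \<and> (\<forall>t. \<alpha> t = deriv (deriv \<mu>) t / \<mu> t - 3/2 * (deriv \<mu> t / \<mu> t)^2)"
proof -
  have cL: "continuous_on UNIV Lam"
    using local_rel by (meson DERIV_isCont continuous_at_imp_continuous_on)
  define e where "e = sgn (Lam 0)"
  have e: "e * e = 1" "e \<noteq> 0" using Lam(2)[of 0] unfolding e_def by (auto simp: sgn_real_def)
  define \<mu> where "\<mu> t = e * Lam t" for t
  have pos: "\<mu> t > 0" for t
  proof -
    have "Lam t * Lam 0 > 0" by (rule const_sign[OF cL Lam(2)])
    then show ?thesis unfolding \<mu>_def e_def by (auto simp: sgn_real_def zero_less_mult_iff)
  qed
  have d1: "DERIV \<mu> t :> e * deriv Lam t" for t unfolding \<mu>_def[abs_def]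
    using local_rel[of t] by (intro DERIV_cmult) blast
  have dm: "deriv \<mu> = (\<lambda>t. e * deriv Lam t)" by (rule ext) (rule DERIV_imp_deriv[OF d1])
  have d2: "DERIV (deriv \<mu>) t :> e * deriv (deriv Lam) t" for t unfolding dm
    using local_rel[of t] by (intro DERIV_cmult) blast
  have dm2: "deriv (deriv \<mu>) = (\<lambda>t. e * deriv (deriv Lam) t)" by (rule ext) (rule DERIV_imp_deriv[OF d2])
  show ?thesis
  proof (intro exI[of _ \<mu>] conjI allI)
    fix t
    show "\<mu> t > 0" by (rule pos)
    show "\<mu> (t + 2*pi) = \<mu> t" unfolding \<mu>_def Lam_per ..
    show "DERIV \<mu> t :> deriv \<mu> t" using d1[of t] unfolding dm .
    show "DERIV (deriv \<mu>) t :> deriv (deriv \<mu>) t" using d2[of t] unfolding dm2 .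
    have "\<alpha> t = deriv (deriv Lam) t / Lam t - 3/2 * (deriv Lam t / Lam t)^2" using local_rel[of t] by blast
    then show "\<alpha> t = deriv (deriv \<mu>) t / \<mu> t - 3/2 * (deriv \<mu> t / \<mu> t)^2"
      unfolding dm2 unfolding dm \<mu>_def using e by (simp add: power2_eq_square field_simps)
  qed
qed

end



theorem corollary2:
  fixes K :: "(real^3) set" and k :: nat
    and \<alpha> \<beta> :: "real \<Rightarrow> real" and y :: "real \<Rightarrow> real^3"
  assumes "k \<ge> 5"
    and "regular_convex_cone K"
    and "Ck_pos_curved_boundary k K"
    and "\<forall>t. \<alpha> (t + 2*pi) = \<alpha> t" and "\<forall>t. \<beta> (t + 2*pi) = \<beta> t"
    and "Ck (k - 4) \<alpha>" and "Ck (k - 5) \<beta>"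
    and "Ck_vec 3 y" and "\<forall>t. y (t + 2*pi) = y t"
    and "\<forall>t. vderiv (vderiv (vderiv y)) t + (2 * \<alpha> t) *\<^sub>R vderiv y t
              + (deriv \<alpha> t) *\<^sub>R y t + (\<beta> t) *\<^sub>R y t = 0"
    and "\<forall>t. det3 (vderiv (vderiv y) t) (vderiv y t) (y t) = 1"
    and "\<forall>t. y t \<in> frontier K - {0}"
    and "\<forall>x \<in> frontier K - {0}. \<exists>!t. t \<in> {0..<2*pi} \<and> (\<exists>l>0. x = l *\<^sub>R y t)"
    and "\<forall>T. is_monodromy \<alpha> T \<longrightarrow> \<not> has_eigenvalue_one T"
  shows "\<not> has_global_periodic_FL K"
proof
  assume "has_global_periodic_FL K"
  then obtain L yt bt where L: "L > 0" and ytC: "Ck_vec 3 yt" and ytper: "\<forall>s. yt (s + L) = yt s"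
    and uniq: "\<forall>x \<in> frontier K - {0}. \<exists>!s. s \<in> {0..<L} \<and> (\<exists>l. l \<noteq> 0 \<and> x = l *\<^sub>R yt s)"
    and ytdet: "\<forall>s. det3 (vderiv (vderiv yt) s) (vderiv yt s) (yt s) = 1"
    and yteq: "\<forall>s. vderiv (vderiv (vderiv yt)) s + bt s *\<^sub>R yt s = 0"
    unfolding has_global_periodic_FL_def by blast
  interpret F: FLsetup y yt \<alpha> \<beta> bt L
  proof
    show "Ck_vec 3 y" by fact
    show "\<And>t. y (t + 2*pi) = y t" using assms(9) by blast
    show "\<And>t. vderiv (vderiv (vderiv y)) t + (2 * \<alpha> t) *\<^sub>R vderiv y t
              + (deriv \<alpha> t) *\<^sub>R y t + (\<beta> t) *\<^sub>R y t = 0" using assms(10) by blast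
    show "\<And>t. det3 (vderiv (vderiv y) t) (vderiv y t) (y t) = 1" using assms(11) by blast
    show "Ck_vec 3 yt" by fact
    show "L > 0" by fact
    show "\<And>s. yt (s + L) = yt s" using ytper by blast
    show "\<And>s. det3 (vderiv (vderiv yt) s) (vderiv yt s) (yt s) = 1" using ytdet by blast
    show "\<And>s. vderiv (vderiv (vderiv yt)) s + bt s *\<^sub>R yt s = 0" using yteq by blast
    show "\<And>t. \<exists>!s. s \<in> {0..<L} \<and> (\<exists>l. l \<noteq> 0 \<and> y t = l *\<^sub>R yt s)"
      using uniq assms(12) by blast
  qed
  obtain \<mu> where "\<forall>t. \<mu> t > 0" "\<forall>t. \<mu> (t + 2*pi) = \<mu> t" "\<forall>t. DERIV \<mu> t :> deriv \<mu> t"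
      "\<forall>t. DERIV (deriv \<mu>) t :> deriv (deriv \<mu>) t"
      "\<forall>t. \<alpha> t = deriv (deriv \<mu>) t / \<mu> t - 3/2 * (deriv \<mu> t / \<mu> t)^2"
    using F.mu_exists by blast
  then obtain T where "is_monodromy \<alpha> T" "has_eigenvalue_one T"
    using hill_from_mu[of \<mu> \<alpha>] by blast
  then show False using assms(14) by blast
qed

end
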